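(* Let $G$ be a $(2K_2, K_5-e)$-free graph. Then $\chi(G)\le\omega(G)+4$.
   Context: All graphs are finite, simple and undirected. $2K_2$ is the disjoint union of two edges; $K_5-e$ is the complete graph on 5 vertices minus one edge. A graph is $\mathcal F$-free if it has no induced subgraph isomorphic to a member of $\mathcal F$. $\chi$ is the chromatic number and $\omega$ the clique number. *)

theory Defs
  imports Main
begin

definition graph :: "'a set \<Rightarrow> ('a \<Rightarrow> 'a \<Rightarrow> bool) \<Rightarrow> bool" where
  "graph V E \<longleftrightarrow> finite V \<and> (\<forall>u v. E u v \<longrightarrow> E v u) \<and> (\<forall>v. \<not> E v v)
     \<and> (\<forall>u v. E u v \<longrightarrow> u \<in> V \<and> v \<in> V)"

definition contains_induced ::
  "'a set \<Rightarrow> ('a \<Rightarrow> 'a \<Rightarrow> bool) \<Rightarrow> 'b set \<Rightarrow> ('b \<Rightarrow> 'b \<Rightarrow> bool) \<Rightarrow> bool" where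
  "contains_induced V E W F \<longleftrightarrow>
     (\<exists>f. inj_on f W \<and> f ` W \<subseteq> V \<and> (\<forall>x\<in>W. \<forall>y\<in>W. E (f x) (f y) \<longleftrightarrow> F x y))"

definition twoK2_V :: "nat set" where "twoK2_V = {0,1,2,3}"
definition twoK2_E :: "nat \<Rightarrow> nat \<Rightarrow> bool" where
  "twoK2_E x y \<longleftrightarrow> {x,y} = {0,1} \<or> {x,y} = {2,3}"

definition K5e_V :: "nat set" where "K5e_V = {0,1,2,3,4}"
definition K5e_E :: "nat \<Rightarrow> nat \<Rightarrow> bool" where
  "K5e_E x y \<longleftrightarrow> x \<in> K5e_V \<and> y \<in> K5e_V \<and> x \<noteq> y \<and> {x,y} \<noteq> {0,1}"

definition clique :: "'a set \<Rightarrow> ('a \<Rightarrow> 'a \<Rightarrow> bool) \<Rightarrow> 'a set \<Rightarrow> bool" where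
  "clique V E K \<longleftrightarrow> K \<subseteq> V \<and> (\<forall>x\<in>K. \<forall>y\<in>K. x \<noteq> y \<longrightarrow> E x y)"

definition clique_number :: "'a set \<Rightarrow> ('a \<Rightarrow> 'a \<Rightarrow> bool) \<Rightarrow> nat" where
  "clique_number V E = Max (card ` {K. clique V E K})"

definition colouring :: "'a set \<Rightarrow> ('a \<Rightarrow> 'a \<Rightarrow> bool) \<Rightarrow> nat \<Rightarrow> ('a \<Rightarrow> nat) \<Rightarrow> bool" where
  "colouring V E k c \<longleftrightarrow> (\<forall>v\<in>V. c v < k) \<and> (\<forall>u\<in>V. \<forall>v\<in>V. E u v \<longrightarrow> c u \<noteq> c v)"

definition chromatic_number :: "'a set \<Rightarrow> ('a \<Rightarrow> 'a \<Rightarrow> bool) \<Rightarrow> nat" where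
  "chromatic_number V E = (LEAST k. \<exists>c. colouring V E k c)"

end

theory Submission
  imports Defs
begin

lemma twoK2_lemma:
  assumes g: "graph V E" and n2: "\<not> contains_induced V E twoK2_V twoK2_E"
    and V: "x \<in> V" "y \<in> V" "a \<in> V" "b \<in> V"
    and e: "E x y" "E a b" "\<not> E x a" "\<not> E x b" "\<not> E y a" "\<not> E y b"
  shows False
proof -
  have sym: "\<And>u v. E u v \<Longrightarrow> E v u" and irr: "\<And>v. \<not> E v v" using g unfolding graph_def by auto
  have e2: "E y x" "E b a" "\<not> E a x" "\<not> E b x" "\<not> E a y" "\<not> E b y"
    using e sym by blast+
  have d: "x \<noteq> y" "x \<noteq> a" "x \<noteq> b" "y \<noteq> a" "y \<noteq> b" "a \<noteq> b"
    using e e2 irr by metis+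
  define f where "f n = (if n = (0::nat) then x else if n = 1 then y else if n = 2 then a else b)" for n
  have "contains_induced V E twoK2_V twoK2_E"
    unfolding contains_induced_def
  proof (intro exI conjI)
    show "inj_on f twoK2_V" unfolding inj_on_def twoK2_V_def f_def using d by auto
    show "f ` twoK2_V \<subseteq> V" unfolding twoK2_V_def f_def using V by auto
    show "\<forall>p\<in>twoK2_V. \<forall>q\<in>twoK2_V. E (f p) (f q) = twoK2_E p q"
      unfolding twoK2_V_def twoK2_E_def f_def using e e2 irr
      by (auto simp: doubleton_eq_iff)
  qed
  thus False using n2 by simp
qed

lemma K5e_lemma:
  assumes g: "graph V E" and n5: "\<not> contains_induced V E K5e_V K5e_E"
    and V: "x \<in> V" "a \<in> V" "b \<in> V" "c \<in> V" "d \<in> V"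
    and xa: "x \<noteq> a"
    and e: "\<not> E x a" "E x b" "E x c" "E x d" "E a b" "E a c" "E a d" "E b c" "E b d" "E c d"
  shows False
proof -
  have sym: "\<And>u v. E u v \<Longrightarrow> E v u" and irr: "\<And>v. \<not> E v v" using g unfolding graph_def by auto
  have e2: "\<not> E a x" "E b x" "E c x" "E d x" "E b a" "E c a" "E d a" "E c b" "E d b" "E d c"
    using e sym by blast+
  have d: "x \<noteq> b" "x \<noteq> c" "x \<noteq> d" "a \<noteq> b" "a \<noteq> c" "a \<noteq> d" "b \<noteq> c" "b \<noteq> d" "c \<noteq> d"
    using e irr by metis+
  define f where "f n = (if n = (0::nat) then x else if n = 1 then a else if n = 2 then b else if n = 3 then c else d)" for n
  have "contains_induced V E K5e_V K5e_E"
    unfolding contains_induced_def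
  proof (intro exI conjI)
    show "inj_on f K5e_V" unfolding inj_on_def K5e_V_def f_def using d xa by auto
    show "f ` K5e_V \<subseteq> V" unfolding K5e_V_def f_def using V by auto
    show "\<forall>p\<in>K5e_V. \<forall>q\<in>K5e_V. E (f p) (f q) = K5e_E p q"
      unfolding K5e_V_def K5e_E_def f_def using e e2 irr
      by (auto simp: doubleton_eq_iff)
  qed
  thus False using n5 by simp
qed

theorem corollary3p10:
  fixes V :: "'a set" and E :: "'a \<Rightarrow> 'a \<Rightarrow> bool"
  assumes "graph V E"
    and "\<not> contains_induced V E twoK2_V twoK2_E"
    and "\<not> contains_induced V E K5e_V K5e_E"
  shows "chromatic_number V E \<le> clique_number V E + 4"
proof -
  note g = assms(1) and n2 = assms(2) and n5 = assms(3)
  have fin: "finite V" and sym: "\<And>u v. E u v \<Longrightarrow> E v u" and irr: "\<And>v. \<not> E v v"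
    and inV: "\<And>u v. E u v \<Longrightarrow> u \<in> V \<and> v \<in> V" using g unfolding graph_def by auto
  define w where "w = clique_number V E"
  have finC: "finite (card ` {K. clique V E K})"
    by (rule finite_imageI, rule finite_subset[of _ "Pow V"]) (auto simp: clique_def fin)
  have neC: "card ` {K. clique V E K} \<noteq> {}" using clique_def by force
  have "w \<in> card ` {K. clique V E K}" unfolding w_def clique_number_def using finC neC by (rule Max_in)
  then obtain K where cK: "clique V E K" and cardK: "card K = w" by auto
  have maxc: "\<And>K'. clique V E K' \<Longrightarrow> card K' \<le> w"
    unfolding w_def clique_number_def using finC by (auto intro: Max_ge)
  have KV: "K \<subseteq> V" and Kc: "\<And>x y. x \<in> K \<Longrightarrow> y \<in> K \<Longrightarrow> x \<noteq> y \<Longrightarrow> E x y"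
    using cK unfolding clique_def by auto
  have finK: "finite K" using KV fin finite_subset by blast
  obtain h where bij: "bij_betw h {0..<w} K" using ex_bij_betw_nat_finite[OF finK] cardK by auto
  have gK: "\<And>i. i < w \<Longrightarrow> h i \<in> K" using bij unfolding bij_betw_def by auto
  have ginj: "\<And>i j. i < w \<Longrightarrow> j < w \<Longrightarrow> h i = h j \<Longrightarrow> i = j"
    using bij unfolding bij_betw_def inj_on_def by auto
  have Kedge: "\<And>i j. i < w \<Longrightarrow> j < w \<Longrightarrow> i \<noteq> j \<Longrightarrow> E (h i) (h j)"
    using gK ginj Kc by metis
  define ix where "ix x = inv_into {0..<w} h x" for x
  have ixlt: "\<And>x. x \<in> K \<Longrightarrow> ix x < w"
    unfolding ix_def using bij by (metis atLeastLessThan_iff bij_betw_def inv_into_into)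
  have hix: "\<And>x. x \<in> K \<Longrightarrow> h (ix x) = x"
    unfolding ix_def using bij by (meson bij_betw_inv_into_right)
  have miss: "\<And>x. x \<in> V \<Longrightarrow> x \<notin> K \<Longrightarrow> \<exists>i<w. \<not> E x (h i)"
  proof (rule ccontr)
    fix x assume x: "x \<in> V" "x \<notin> K" and "\<not> (\<exists>i<w. \<not> E x (h i))"
    hence a: "\<And>z. z \<in> K \<Longrightarrow> E x z" using hix ixlt by metis
    have "clique V E (insert x K)" unfolding clique_def using KV x a Kc sym by auto
    hence "card (insert x K) \<le> w" by (rule maxc)
    thus False using x finK cardK by simp
  qed
  have nb3: "\<And>x i j k. x \<in> V \<Longrightarrow> x \<notin> K \<Longrightarrow> i < w \<Longrightarrow> j < w \<Longrightarrow> k < w \<Longrightarrow> i \<noteq> j \<Longrightarrow> i \<noteq> k \<Longrightarrow> j \<noteq> k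
      \<Longrightarrow> \<not> (E x (h i) \<and> E x (h j) \<and> E x (h k))"
  proof
    fix x i j k assume x: "x \<in> V" "x \<notin> K" and ijk: "i < w" "j < w" "k < w" "i \<noteq> j" "i \<noteq> k" "j \<noteq> k"
      and a: "E x (h i) \<and> E x (h j) \<and> E x (h k)"
    obtain l where l: "l < w" "\<not> E x (h l)" using miss x by blast
    have "l \<noteq> i" "l \<noteq> j" "l \<noteq> k" using a l by auto
    show False
      apply (rule K5e_lemma[OF g n5, of x "h l" "h i" "h j" "h k"])
      using x l ijk a gK KV Kedge \<open>l \<noteq> i\<close> \<open>l \<noteq> j\<close> \<open>l \<noteq> k\<close> by (auto simp: sym)
  qed
  have tk: "\<And>x y i j. x \<in> V \<Longrightarrow> y \<in> V \<Longrightarrow> i < w \<Longrightarrow> j < w \<Longrightarrow> i \<noteq> j \<Longrightarrow> E x y \<Longrightarrow>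
     \<not> E x (h i) \<Longrightarrow> \<not> E x (h j) \<Longrightarrow> \<not> E y (h i) \<Longrightarrow> \<not> E y (h j) \<Longrightarrow> False"
    using twoK2_lemma[OF g n2] gK KV Kedge by blast
  have "\<exists>c. colouring V E (w + 4) c"
  proof (cases "w \<ge> 4")
    case True
    define c where "c x = (if x \<in> K then ix x
      else if \<not> E x (h 0) \<and> \<not> E x (h 1) then 0
      else if \<not> E x (h 1) \<and> \<not> E x (h 2) then 1
      else if \<not> E x (h 2) \<and> \<not> E x (h 3) then 2
      else if \<not> E x (h 0) \<and> \<not> E x (h 3) then 3
      else if \<not> E x (h 0) \<and> \<not> E x (h 2) then w else w + 1)" for x
    have outc: "(c x = 0 \<and> \<not> E x (h 0) \<and> \<not> E x (h 1)) \<or> (c x = 1 \<and> \<not> E x (h 1) \<and> \<not> E x (h 2))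
      \<or> (c x = 2 \<and> \<not> E x (h 2) \<and> \<not> E x (h 3)) \<or> (c x = 3 \<and> \<not> E x (h 0) \<and> \<not> E x (h 3))
      \<or> (c x = w \<and> \<not> E x (h 0) \<and> \<not> E x (h 2)) \<or> (c x = w + 1 \<and> \<not> E x (h 1) \<and> \<not> E x (h 3))"
      if x: "x \<in> V" "x \<notin> K" for x
    proof -
      have t1: "\<not> (E x (h 0) \<and> E x (h 1) \<and> E x (h 2))" using nb3[OF x, of 0 1 2] True by auto
      have t2: "\<not> (E x (h 0) \<and> E x (h 1) \<and> E x (h 3))" using nb3[OF x, of 0 1 3] True by auto
      have t3: "\<not> (E x (h 0) \<and> E x (h 2) \<and> E x (h 3))" using nb3[OF x, of 0 2 3] True by auto
      have t4: "\<not> (E x (h 1) \<and> E x (h 2) \<and> E x (h 3))" using nb3[OF x, of 1 2 3] True by auto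
      show ?thesis using t1 t2 t3 t4 x True unfolding c_def
        by (cases "E x (h 0)"; cases "E x (h 1)"; cases "E x (h 2)"; cases "E x (h 3)"; simp)
    qed
    have "colouring V E (w + 4) c"
      unfolding colouring_def
    proof (intro conjI ballI impI)
      fix v assume "v \<in> V" thus "c v < w + 4" using ixlt[of v] outc[of v] True by (cases "v \<in> K") (auto simp: c_def)
    next
      fix u v assume u: "u \<in> V" and v: "v \<in> V" and uv: "E u v"
      show "c u \<noteq> c v"
      proof
        assume eq: "c u = c v"
        consider "u \<in> K" "v \<in> K" | "u \<in> K" "v \<notin> K" | "u \<notin> K" "v \<in> K" | "u \<notin> K" "v \<notin> K" by blast
        thus False
        proof cases
          case 1
          have "c u = ix u" "c v = ix v" using 1 unfolding c_def by simp_all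
          hence "u = v" using eq hix[OF 1(1)] hix[OF 1(2)] by metis
          thus False using irr[of u] uv by simp
        next
          case 2
          have "c u < w" "h (c u) = u" using 2 ixlt hix unfolding c_def by auto
          moreover have "E v u" using uv sym by blast
          ultimately show False using outc[OF v 2(2)] eq by auto
        next
          case 3
          have "c v < w" "h (c v) = v" using 3 ixlt hix unfolding c_def by auto
          thus False using outc[OF u 3(1)] eq uv by auto
        next
          case 4
                    have tk': "\<And>i j. i < 4 \<Longrightarrow> j < 4 \<Longrightarrow> i \<noteq> j \<Longrightarrow> \<not> E u (h i) \<Longrightarrow> \<not> E u (h j) \<Longrightarrow> \<not> E v (h i) \<Longrightarrow> \<not> E v (h j) \<Longrightarrow> False"
          proof -
            fix i j :: nat assume a: "i < 4" "j < 4" "i \<noteq> j" "\<not> E u (h i)" "\<not> E u (h j)" "\<not> E v (h i)" "\<not> E v (h j)"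
            have "i < w" "j < w" using a True by auto
            thus False using tk[OF u v _ _ a(3) uv a(4-7)] by blast
          qed
          have ww: "w \<noteq> 0" "w \<noteq> 1" "w \<noteq> 2" "w \<noteq> 3" "w + 1 \<noteq> 0" "w + 1 \<noteq> 1" "w + 1 \<noteq> 2" "w + 1 \<noteq> 3" using True by auto
          from outc[OF u 4(1)] show False
          proof (elim disjE conjE)
            assume "c u = 0" "\<not> E u (h 0)" "\<not> E u (h 1)"
            thus False using outc[OF v 4(2)] eq ww tk'[of 0 1] by auto
          next
            assume "c u = 1" "\<not> E u (h 1)" "\<not> E u (h 2)"
            thus False using outc[OF v 4(2)] eq ww tk'[of 1 2] by auto
          next
            assume "c u = 2" "\<not> E u (h 2)" "\<not> E u (h 3)"
            thus False using outc[OF v 4(2)] eq ww tk'[of 2 3] by auto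
          next
            assume "c u = 3" "\<not> E u (h 0)" "\<not> E u (h 3)"
            thus False using outc[OF v 4(2)] eq ww tk'[of 0 3] by auto
          next
            assume "c u = w" "\<not> E u (h 0)" "\<not> E u (h 2)"
            thus False using outc[OF v 4(2)] eq ww tk'[of 0 2] by auto
          next
            assume "c u = w + 1" "\<not> E u (h 1)" "\<not> E u (h 3)"
            thus False using outc[OF v 4(2)] eq ww tk'[of 1 3] by auto
          qed
        qed
      qed
    qed
    thus ?thesis by blast
  next
    case False
    define m where "m x i = (i < w \<and> \<not> E x (h i))" for x i
    define c where "c x = (if x \<in> K then ix x
      else if m x 0 \<and> m x 1 then w
      else if m x 1 \<and> m x 2 then w + 1
      else if m x 0 \<and> m x 2 then w + 2
      else if m x 0 then 0 else if m x 1 then 1 else 2)" for x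
    have outc: "(c x = w \<and> m x 0 \<and> m x 1) \<or> (c x = w + 1 \<and> m x 1 \<and> m x 2)
      \<or> (c x = w + 2 \<and> m x 0 \<and> m x 2)
      \<or> (c x < w \<and> \<not> E x (h (c x)) \<and> (\<forall>j. m x j \<longrightarrow> j = c x))"
      if x: "x \<in> V" "x \<notin> K" for x
    proof -
      obtain i where i: "i < w" "\<not> E x (h i)" using miss x by blast
      have "i = 0 \<or> i = 1 \<or> i = 2" using i False by linarith
      hence some: "m x 0 \<or> m x 1 \<or> m x 2" using i unfolding m_def by auto
      have allm: "\<And>j. m x j \<Longrightarrow> j = 0 \<or> j = 1 \<or> j = 2" using False unfolding m_def by auto
      have lt: "\<And>j. m x j \<Longrightarrow> j < w" and ne: "\<And>j. m x j \<Longrightarrow> \<not> E x (h j)" unfolding m_def by auto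
      have cx: "c x = (if m x 0 \<and> m x 1 then w
      else if m x 1 \<and> m x 2 then w + 1
      else if m x 0 \<and> m x 2 then w + 2
      else if m x 0 then 0 else if m x 1 then 1 else 2)" using x by (simp add: c_def)
      show ?thesis unfolding cx
      proof (cases "m x 0"; cases "m x 1"; cases "m x 2")
      qed (use some allm lt ne in force)+
    qed
    have clash: False if x: "x \<in> V" "x \<notin> K" and y: "y \<in> V" "y \<notin> K" and i: "i < w" and xy: "E x y"
      and ax: "\<forall>j<w. j \<noteq> i \<longrightarrow> E x (h j)" and ay: "\<forall>j<w. j \<noteq> i \<longrightarrow> E y (h j)" for x y i
    proof -
      have ax': "E x z \<and> E y z" if z: "z \<in> K - {h i}" for z
      proof -
        have z1: "ix z < w" "h (ix z) = z" using z ixlt hix by auto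
        have "ix z \<noteq> i" using z z1 by auto
        thus ?thesis using ax ay z1 by metis
      qed
      have sx: "\<And>z. z \<in> K - {h i} \<Longrightarrow> E z x \<and> E z y" using ax' sym by blast
      have yx: "E y x" using xy sym by blast
      have "clique V E (insert x (insert y (K - {h i})))"
        unfolding clique_def using KV x y ax' sx Kc xy yx by auto
      hence "card (insert x (insert y (K - {h i}))) \<le> w" by (rule maxc)
      moreover have "x \<noteq> y" using xy irr by auto
      moreover have "card (K - {h i}) = w - 1" using gK[OF i] cardK finK by simp
      ultimately show False using x y finK i by simp
    qed
    have "colouring V E (w + 4) c"
      unfolding colouring_def
    proof (intro conjI ballI impI)
      fix v assume v: "v \<in> V"
      show "c v < w + 4"
      proof (cases "v \<in> K")
        case True thus ?thesis using ixlt[of v] by (simp add: c_def)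
      next
        case False thus ?thesis using outc[OF v False] by linarith
      qed
    next
      fix u v assume u: "u \<in> V" and v: "v \<in> V" and uv: "E u v"
      show "c u \<noteq> c v"
      proof
        assume eq: "c u = c v"
        consider "u \<in> K" "v \<in> K" | "u \<in> K" "v \<notin> K" | "u \<notin> K" "v \<in> K" | "u \<notin> K" "v \<notin> K" by blast
        thus False
        proof cases
          case 1
          have "c u = ix u" "c v = ix v" using 1 unfolding c_def by simp_all
          hence "u = v" using eq hix[OF 1(1)] hix[OF 1(2)] by metis
          thus False using irr[of u] uv by simp
        next
          case 2
          have cu: "c u = ix u" using 2 by (simp add: c_def)
          have a: "c u < w" "h (c u) = u" using 2 ixlt hix cu by auto
          have vu: "E v u" using uv sym by blast
          from outc[OF v 2(2)] show False
          proof (elim disjE conjE)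
            assume "c v < w" "\<not> E v (h (c v))"
            thus False using a eq vu by simp
          qed (use a eq in simp_all)
        next
          case 3
          have cv: "c v = ix v" using 3 by (simp add: c_def)
          have a: "c v < w" "h (c v) = v" using 3 ixlt hix cv by auto
          from outc[OF u 3(1)] show False
          proof (elim disjE conjE)
            assume "c u < w" "\<not> E u (h (c u))"
            thus False using a eq uv by simp
          qed (use a eq in simp_all)
        next
          case 4
          note tk' = tk[OF u v _ _ _ uv]
          from outc[OF u 4(1)] show False
          proof (elim disjE conjE)
            assume h1: "c u = w" "m u 0" "m u 1"
            have "m v 0 \<and> m v 1" using outc[OF v 4(2)] eq h1(1) by (elim disjE) simp_all
            thus False using h1 tk'[of 0 1] unfolding m_def by simp
          next
            assume h1: "c u = w + 1" "m u 1" "m u 2"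
            have "m v 1 \<and> m v 2" using outc[OF v 4(2)] eq h1(1) by (elim disjE) simp_all
            thus False using h1 tk'[of 1 2] unfolding m_def by simp
          next
            assume h1: "c u = w + 2" "m u 0" "m u 2"
            have "m v 0 \<and> m v 2" using outc[OF v 4(2)] eq h1(1) by (elim disjE) simp_all
            thus False using h1 tk'[of 0 2] unfolding m_def by simp
          next
            assume a: "c u < w" "\<not> E u (h (c u))" "\<forall>j. m u j \<longrightarrow> j = c u"
            have au: "\<forall>j<w. j \<noteq> c u \<longrightarrow> E u (h j)" using a(3) unfolding m_def by blast
            from outc[OF v 4(2)] show False
            proof (elim disjE conjE)
              assume "\<forall>j. m v j \<longrightarrow> j = c v"
              hence av: "\<forall>j<w. j \<noteq> c u \<longrightarrow> E v (h j)" using eq unfolding m_def by auto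
              show False using clash[OF u 4(1) v 4(2) a(1) uv au av] .
            qed (use a eq in simp_all)
          qed
        qed
      qed
    qed
    thus ?thesis by blast
  qed
  then obtain c where "colouring V E (w + 4) c" by blast
  hence "chromatic_number V E \<le> w + 4" unfolding chromatic_number_def by (auto intro: Least_le)
  thus ?thesis unfolding w_def .
qed

end
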